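(* Let $\mathbb{K}$ be a field and $\alpha\in\mathbb{K}^*$. For $n$ even, $X_n(\alpha)$ is smooth. For $n$ odd and $\alpha\neq(-1)^{(n+1)/2}$, $X_n(\alpha)$ is smooth. For $n$ odd and $\alpha=(-1)^{(n+1)/2}$, $X_n(\alpha)$ has a unique singular point, namely $x_i=x'_i=0$ for odd $i$ and $x_i=x'_i=-(-1)^{(n+i-1)/2}$ for even $i$.
   Context: For $\alpha$ invertible and $n\ge1$, $X_n(\alpha)$ is the affine variety over $\mathbb{K}$ in variables $x_1,\dots,x_n,x'_1,\dots,x'_n$ defined by $x_1x'_1=1+\alpha x_2$, $x_ix'_i=1+x_{i-1}x_{i+1}$ for $2\le i\le n-1$, $x_nx'_n=1+x_{n-1}$ (for $n=1$: $x_1x'_1=1+\alpha$); $X_0(\alpha)$ is a point. *)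

theory Defs
  imports Main
begin

(* Points of X_n(beta) with coordinates in a field 'b.  A point is a pair (x, x')
   of functions nat => 'b, with coordinates indexed by 1..n and junk values
   forced to 0 outside {1..n}. *)

definition rhsX :: "'b::field \<Rightarrow> nat \<Rightarrow> (nat \<Rightarrow> 'b) \<Rightarrow> nat \<Rightarrow> 'b" where
  "rhsX \<beta> n x i =
     (if n = 1 then 1 + \<beta>
      else if i = 1 then 1 + \<beta> * x 2
      else if i < n then 1 + x (i - 1) * x (i + 1)
      else 1 + x (n - 1))"

definition Xpts :: "'b::field \<Rightarrow> nat \<Rightarrow> ((nat \<Rightarrow> 'b) \<times> (nat \<Rightarrow> 'b)) set" where
  "Xpts \<beta> n = {(x, x'). (\<forall>j. j \<notin> {1..n} \<longrightarrow> x j = 0 \<and> x' j = 0) \<and>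
                       (\<forall>i\<in>{1..n}. x i * x' i = rhsX \<beta> n x i)}"

(* Jacobian of f_i = x_i x'_i - rhsX_i, written out entrywise:
   dX = partial derivative of f_i w.r.t. x_j, dX' = w.r.t. x'_j. *)
definition dX :: "'b::field \<Rightarrow> nat \<Rightarrow> (nat \<Rightarrow> 'b) \<Rightarrow> (nat \<Rightarrow> 'b) \<Rightarrow> nat \<Rightarrow> nat \<Rightarrow> 'b" where
  "dX \<beta> n x x' i j =
     (if j = i then x' i else 0)
     - (if i = 1 \<and> 2 \<le> n \<and> j = 2 then \<beta> else 0)
     - (if 2 \<le> i \<and> i + 1 \<le> n \<and> j = i - 1 then x (i + 1) else 0)
     - (if 2 \<le> i \<and> i + 1 \<le> n \<and> j = i + 1 then x (i - 1) else 0)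
     - (if i = n \<and> 2 \<le> n \<and> j = n - 1 then 1 else 0)"

definition dX' :: "(nat \<Rightarrow> 'b::field) \<Rightarrow> nat \<Rightarrow> nat \<Rightarrow> 'b" where
  "dX' x i j = (if j = i then x i else 0)"

(* Jacobian criterion: a point of the (n equations, 2n variables) variety is singular
   iff the rows of the Jacobian are linearly dependent (rank < n). *)
definition singular_pt :: "'b::field \<Rightarrow> nat \<Rightarrow> (nat \<Rightarrow> 'b) \<times> (nat \<Rightarrow> 'b) \<Rightarrow> bool" where
  "singular_pt \<beta> n p \<longleftrightarrow> p \<in> Xpts \<beta> n \<and>
     (\<exists>c :: nat \<Rightarrow> 'b. (\<exists>i\<in>{1..n}. c i \<noteq> 0) \<and>
        (\<forall>j\<in>{1..n}. (\<Sum>i=1..n. c i * dX \<beta> n (fst p) (snd p) i j) = 0) \<and>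
        (\<forall>j\<in>{1..n}. (\<Sum>i=1..n. c i * dX' (fst p) i j) = 0))"

definition smoothX :: "'b::field \<Rightarrow> nat \<Rightarrow> bool" where
  "smoothX \<beta> n \<longleftrightarrow> (\<nexists>p. singular_pt \<beta> n p)"

definition special_pt :: "nat \<Rightarrow> (nat \<Rightarrow> 'b::field) \<times> (nat \<Rightarrow> 'b)" where
  "special_pt n =
     (let v = (\<lambda>i. if i \<in> {1..n} \<and> even i then - ((-1) ^ ((n + i - 1) div 2)) else 0) in (v, v))"

end

theory Submission imports Defs begin

lemma sum_single:
  assumes "finite A" "\<And>i. i \<in> A \<Longrightarrow> i \<noteq> k \<Longrightarrow> f i = 0"
  shows "sum f A = (if k \<in> A then f k else 0)"
proof (cases "k \<in> A")
  case True
  then have "sum f A = f k + sum f (A - {k})" using assms(1) by (simp add: sum.remove)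
  also have "sum f (A - {k}) = 0" using assms(2) by (intro sum.neutral) auto
  finally show ?thesis using True by simp
next
  case False
  then show ?thesis using assms(2) by (auto intro: sum.neutral)
qed

definition XE :: "'b::field \<Rightarrow> nat \<Rightarrow> (nat \<Rightarrow> 'b) \<Rightarrow> nat \<Rightarrow> 'b" where
  "XE \<beta> n x k = (if k = 0 then \<beta> else if k = n + 1 then 1 else x k)"

definition CE :: "nat \<Rightarrow> (nat \<Rightarrow> 'b::field) \<Rightarrow> nat \<Rightarrow> 'b" where
  "CE n c k = (if k \<in> {1..n} then c k else 0)"

lemma sum_dX':
  assumes "j \<in> {1..n}"
  shows "(\<Sum>i=1..n. c i * dX' x i j) = c j * x j"
  by (subst sum_single[where k=j]) (use assms in \<open>auto simp: dX'_def\<close>)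

lemma row_eq:
  assumes "i \<in> {1..n}"
  shows "rhsX \<beta> n x i = 1 + XE \<beta> n x (i - 1) * XE \<beta> n x (i + 1)"
  using assms by (auto simp: rhsX_def XE_def numeral_eq_Suc)

lemma col_eq:
  fixes \<beta> :: "'b::field"
  assumes j: "j \<in> {1..n}"
  shows "(\<Sum>i=1..n. c i * dX \<beta> n x x' i j) =
     CE n c j * x' j - CE n c (j - 1) * XE \<beta> n x (j - 2) - CE n c (j + 1) * XE \<beta> n x (j + 2)"
proof -
  have S1: "(\<Sum>i=1..n. c i * (if j = i then x' i else 0)) = c j * x' j"
    by (subst sum_single[where k=j]) (use j in auto)
  have S2: "(\<Sum>i=1..n. c i * (if i = 1 \<and> 2 \<le> n \<and> j = 2 then \<beta> else 0))
      = (if j = 2 \<and> 2 \<le> n then c 1 * \<beta> else 0)"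
    by (subst sum_single[where k=1]) (use j in auto)
  have S3: "(\<Sum>i=1..n. c i * (if 2 \<le> i \<and> i + 1 \<le> n \<and> j = i - 1 then x (i + 1) else 0))
      = (if j + 2 \<le> n then c (j + 1) * x (j + 2) else 0)"
    by (subst sum_single[where k="j+1"]) (use j in auto)
  have S4: "(\<Sum>i=1..n. c i * (if 2 \<le> i \<and> i + 1 \<le> n \<and> j = i + 1 then x (i - 1) else 0))
      = (if 3 \<le> j then c (j - 1) * x (j - 2) else 0)"
    by (subst sum_single[where k="j-1"]) (use j in \<open>auto simp: numeral_eq_Suc\<close>)
  have S5: "(\<Sum>i=1..n. c i * (if i = n \<and> 2 \<le> n \<and> j = n - 1 then 1 else 0))
      = (if j + 1 = n then c n else 0)"
    by (subst sum_single[where k=n]) (use j in auto)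
  have "(\<Sum>i=1..n. c i * dX \<beta> n x x' i j) =
     (\<Sum>i=1..n. c i * (if j = i then x' i else 0))
     - (\<Sum>i=1..n. c i * (if i = 1 \<and> 2 \<le> n \<and> j = 2 then \<beta> else 0))
     - (\<Sum>i=1..n. c i * (if 2 \<le> i \<and> i + 1 \<le> n \<and> j = i - 1 then x (i + 1) else 0))
     - (\<Sum>i=1..n. c i * (if 2 \<le> i \<and> i + 1 \<le> n \<and> j = i + 1 then x (i - 1) else 0))
     - (\<Sum>i=1..n. c i * (if i = n \<and> 2 \<le> n \<and> j = n - 1 then 1 else 0))"
    unfolding dX_def by (simp add: right_diff_distrib sum_subtractf)
  also have "\<dots> = CE n c j * x' j - CE n c (j - 1) * XE \<beta> n x (j - 2) - CE n c (j + 1) * XE \<beta> n x (j + 2)"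
    unfolding S1 S2 S3 S4 S5 using j
    by (auto simp: CE_def XE_def numeral_eq_Suc)
  finally show ?thesis .
qed


lemma sign_flip:
  assumes "m \<le> h + 1"
  shows "(-1::'b::field) ^ (h + 1 - m) = - ((-1) ^ (h + m))"
proof -
  have "even (h + 1 - m) \<longleftrightarrow> odd (h + m)" using assms by presburger
  then show ?thesis by (auto simp: minus_one_power_iff)
qed

lemma core:
  fixes \<beta> :: "'b::field"
  assumes b: "\<beta> \<noteq> 0" and sp: "singular_pt \<beta> n (x, x')"
  shows "odd n \<and> \<beta> = (-1) ^ ((n + 1) div 2) \<and> (x, x') = special_pt n"
proof -
  from sp obtain c where mem: "(x, x') \<in> Xpts \<beta> n" and cnz: "\<exists>i\<in>{1..n}. c i \<noteq> 0"
    and col: "\<forall>j\<in>{1..n}. (\<Sum>i=1..n. c i * dX \<beta> n x x' i j) = 0"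
    and col': "\<forall>j\<in>{1..n}. (\<Sum>i=1..n. c i * dX' x i j) = 0"
    unfolding singular_pt_def by auto
  define X where "X = XE \<beta> n x"
  define C where "C = CE n c"
  have out: "\<And>j. j \<notin> {1..n} \<Longrightarrow> x j = 0 \<and> x' j = 0" using mem unfolding Xpts_def by auto
  have row: "\<And>i. i \<in> {1..n} \<Longrightarrow> x i * x' i = 1 + X (i - 1) * X (i + 1)"
    using mem row_eq unfolding Xpts_def X_def by fastforce
  have Xin: "\<And>j. j \<in> {1..n} \<Longrightarrow> X j = x j" by (auto simp: X_def XE_def)
  have Cnz: "\<And>j. C j \<noteq> 0 \<Longrightarrow> j \<in> {1..n}" by (auto simp: C_def CE_def split: if_splits)
  have Cin: "\<And>j. j \<in> {1..n} \<Longrightarrow> C j = c j" by (auto simp: C_def CE_def)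
  have Cx: "\<And>j. C j * X j = 0"
  proof -
    fix j show "C j * X j = 0"
    proof (cases "j \<in> {1..n}")
      case True
      then show ?thesis using col' sum_dX'[OF True, of c x] Xin Cin by auto
    next
      case False then show ?thesis using Cnz by fastforce
    qed
  qed
  have colC: "\<And>j. j \<in> {1..n} \<Longrightarrow> C j * x' j = C (j - 1) * X (j - 2) + C (j + 1) * X (j + 2)"
  proof -
    fix j assume j: "j \<in> {1..n}"
    have "C j * x' j - C (j - 1) * X (j - 2) - C (j + 1) * X (j + 2) = 0"
      using col j col_eq[OF j, of c \<beta> x x'] unfolding C_def X_def by auto
    then show "C j * x' j = C (j - 1) * X (j - 2) + C (j + 1) * X (j + 2)"
      by (simp add: algebra_simps)
  qed
  have a: "\<And>j. C j \<noteq> 0 \<Longrightarrow> X (j - 1) \<noteq> 0 \<and> X (j + 1) \<noteq> 0"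
  proof -
    fix j assume cj: "C j \<noteq> 0"
    then have j: "j \<in> {1..n}" by (rule Cnz)
    have "x j = 0" using Cx[of j] cj Xin[OF j] by auto
    then have "1 + X (j - 1) * X (j + 1) = 0" using row[OF j] by simp
    then show "X (j - 1) \<noteq> 0 \<and> X (j + 1) \<noteq> 0" by auto
  qed
  have b1: "\<And>j. C j \<noteq> 0 \<Longrightarrow> C (j + 1) = 0" using a Cx by (metis mult_eq_0_iff)
  have b2: "\<And>j. C j \<noteq> 0 \<Longrightarrow> C (j - 1) = 0" using a Cx by (metis mult_eq_0_iff)
  have up: "\<And>j. C j \<noteq> 0 \<Longrightarrow> j + 1 \<le> n \<Longrightarrow> C (j + 2) \<noteq> 0"
  proof -
    fix j assume cj: "C j \<noteq> 0" and jn: "j + 1 \<le> n"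
    have j1: "j + 1 \<in> {1..n}" using jn by auto
    have "C (j + 1) * x' (j + 1) = C j * X (j - 1) + C (j + 2) * X (j + 3)"
      using colC[OF j1] using Cnz[OF cj] by (simp add: numeral_eq_Suc)
    then have "C j * X (j - 1) + C (j + 2) * X (j + 3) = 0" using b1[OF cj] by simp
    moreover have "C j * X (j - 1) \<noteq> 0" using cj a[OF cj] by simp
    ultimately show "C (j + 2) \<noteq> 0" by auto
  qed
  have down: "\<And>j. C j \<noteq> 0 \<Longrightarrow> 2 \<le> j \<Longrightarrow> C (j - 2) \<noteq> 0"
  proof -
    fix j assume cj: "C j \<noteq> 0" and j2: "2 \<le> j"
    have j1: "j - 1 \<in> {1..n}" using j2 Cnz[OF cj] by auto
    have e1: "j - 1 - 1 = j - 2" "j - 1 - 2 = j - 3" "j - 1 + 1 = j" "j - 1 + 2 = j + 1"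
      using j2 by auto
    have "C (j - 1) * x' (j - 1) = C (j - 2) * X (j - 3) + C j * X (j + 1)"
      using colC[OF j1] unfolding e1 .
    then have "C (j - 2) * X (j - 3) + C j * X (j + 1) = 0" using b2[OF cj] by simp
    moreover have "C j * X (j + 1) \<noteq> 0" using cj a[OF cj] by simp
    ultimately show "C (j - 2) \<noteq> 0" by auto
  qed
  have Sodd: "\<And>j. C j \<noteq> 0 \<Longrightarrow> odd j \<and> C 1 \<noteq> 0"
  proof -
    fix j show "C j \<noteq> 0 \<Longrightarrow> odd j \<and> C 1 \<noteq> 0"
    proof (induction j rule: less_induct)
      case (less j)
      have "j \<ge> 1" using Cnz[OF less.prems] by auto
      show ?case
      proof (cases "j = 1")
        case True then show ?thesis using less.prems by simp
      next
        case False
        then have j2: "2 \<le> j" using \<open>j \<ge> 1\<close> by auto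
        have "odd (j - 2) \<and> C 1 \<noteq> 0" using less.IH[of "j - 2"] down[OF less.prems j2] j2 by auto
        then show ?thesis using j2 by auto
      qed
    qed
  qed
  obtain k where "k \<in> {1..n}" "c k \<noteq> 0" using cnz by auto
  then have "C k \<noteq> 0" using Cin by auto
  then have C1: "C 1 \<noteq> 0" using Sodd by blast
  have Sall: "\<And>m. 2 * m + 1 \<le> n \<Longrightarrow> C (2 * m + 1) \<noteq> 0"
  proof -
    fix m show "2 * m + 1 \<le> n \<Longrightarrow> C (2 * m + 1) \<noteq> 0"
    proof (induction m)
      case 0 then show ?case using C1 by simp
    next
      case (Suc m)
      then have "C (2 * m + 1) \<noteq> 0" by simp
      from up[OF this] Suc.prems show ?case by (simp add: algebra_simps)
    qed
  qed
  have nodd: "odd n"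
  proof (rule ccontr)
    assume "\<not> odd n"
    moreover have "n \<ge> 1" using Cnz[OF C1] by auto
    moreover from \<open>\<not> odd n\<close> obtain k where k0: "n = 2 * k" by blast
    ultimately have k: "n = 2 * k" "k \<ge> 1" by auto
    define m where "m = k - 1"
    have m: "n = 2 * m + 2" using k by (simp add: m_def)
    have "C (2 * m + 1) \<noteq> 0" using Sall m by simp
    from up[OF this] have "C (2 * m + 1 + 2) \<noteq> 0" using m by simp
    then show False using Cnz m by fastforce
  qed
  then obtain h where n: "n = 2 * h + 1" by (metis oddE)
  have Codd: "\<And>j. j \<in> {1..n} \<Longrightarrow> C j \<noteq> 0 \<longleftrightarrow> odd j"
  proof -
    fix j assume j: "j \<in> {1..n}"
    show "C j \<noteq> 0 \<longleftrightarrow> odd j"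
    proof
      assume "C j \<noteq> 0" then show "odd j" using Sodd by blast
    next
      assume "odd j" then obtain m where "j = 2 * m + 1" by (metis oddE)
      then show "C j \<noteq> 0" using Sall j by auto
    qed
  qed
  have xodd: "\<And>j. j \<in> {1..n} \<Longrightarrow> odd j \<Longrightarrow> x j = 0 \<and> x' j = 0"
  proof -
    fix j assume j: "j \<in> {1..n}" and oj: "odd j"
    have cj: "C j \<noteq> 0" using Codd j oj by auto
    have xj: "x j = 0" using Cx[of j] cj Xin[OF j] by auto
    have "C (j - 1) = 0" using Sodd[of "j - 1"] oj j by (cases "j - 1 = 0") auto
    moreover have "C (j + 1) = 0" using Sodd[of "j + 1"] oj by auto
    ultimately have "C j * x' j = 0" using colC[OF j] by simp
    then show "x j = 0 \<and> x' j = 0" using xj cj by simp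
  qed
  have Xodd: "\<And>j. odd j \<Longrightarrow> j \<le> n \<Longrightarrow> X (j - 1) * X (j + 1) = -1"
  proof -
    fix j assume oj: "odd j" and jn: "j \<le> n"
    then have j: "j \<in> {1..n}" using odd_pos[OF oj] by auto
    have "1 + X (j - 1) * X (j + 1) = 0" using row[OF j] xodd[OF j oj] by simp
    then show "X (j - 1) * X (j + 1) = -1" by (simp add: eq_neg_iff_add_eq_0 add.commute)
  qed
  have Xval: "\<And>d. d \<le> h + 1 \<Longrightarrow> X (2 * (h + 1 - d)) = (-1) ^ d"
  proof -
    fix d show "d \<le> h + 1 \<Longrightarrow> X (2 * (h + 1 - d)) = (-1) ^ d"
    proof (induction d)
      case 0 then show ?case using n by (simp add: X_def XE_def)
    next
      case (Suc d)
      define j where "j = 2 * (h - d) + 1"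
      have oj: "odd j" and jn: "j \<le> n" using n by (auto simp: j_def)
      have e: "j - 1 = 2 * (h + 1 - Suc d)" "j + 1 = 2 * (h + 1 - d)" using Suc.prems
        by (auto simp: j_def)
      have "X (2 * (h + 1 - Suc d)) * (-1) ^ d = -1"
        using Xodd[OF oj jn] Suc.IH Suc.prems unfolding e by simp
      then show ?case by (auto simp: minus_one_power_iff split: if_splits)
    qed
  qed
  have beta: "\<beta> = (-1) ^ ((n + 1) div 2)"
    using Xval[of "h + 1"] n by (simp add: X_def XE_def)
  have xeven: "\<And>i. i \<in> {1..n} \<Longrightarrow> even i \<Longrightarrow> x i = - ((-1) ^ ((n + i - 1) div 2)) \<and> x' i = x i"
  proof -
    fix i assume i: "i \<in> {1..n}" and ei: "even i"
    then obtain m where m: "i = 2 * m" by (metis evenE)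
    have mh: "m \<le> h" "m \<ge> 1" using i m n by auto
    have "x i = (-1) ^ (h + 1 - m)" using Xval[of "h + 1 - m"] mh Xin[OF i] m
      by (simp add: Suc_diff_le)
    also have "\<dots> = - ((-1) ^ (h + m))" using sign_flip[of m h] mh by simp
    also have "h + m = (n + i - 1) div 2" using n m by simp
    finally have xi: "x i = - ((-1) ^ ((n + i - 1) div 2))" .
    have i1: "i - 1 \<in> {1..n}" "i + 1 \<in> {1..n}" using i ei n mh m by auto
    have "X (i - 1) = 0" "X (i + 1) = 0" using xodd[OF i1(1)] xodd[OF i1(2)] Xin i1 ei i by auto
    then have h1: "x i * x' i = 1" using row[OF i] by simp
    have h2: "x i * x i = 1" using xi by (simp add: minus_one_power_iff)
    have h3: "x i \<noteq> 0" using xi by (simp add: minus_one_power_iff)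
    have "x' i = x i" using h1 h2 h3 by (metis mult_left_cancel)
    then show "x i = - ((-1) ^ ((n + i - 1) div 2)) \<and> x' i = x i" using xi by simp
  qed
  have "x = fst (special_pt n) \<and> x' = snd (special_pt n)"
  proof (intro conjI ext)
    fix i
    show "x i = fst (special_pt n) i" "x' i = snd (special_pt n) i"
      using out[of i] xodd[of i] xeven[of i] by (auto simp: special_pt_def Let_def)
  qed
  then show ?thesis using nodd beta by (simp add: prod_eq_iff)
qed


lemma conv:
  fixes \<beta> :: "'b::field"
  assumes on: "odd n" and b: "\<beta> = (-1) ^ ((n + 1) div 2)"
  shows "singular_pt \<beta> n (special_pt n)"
proof -
  obtain h where n: "n = 2 * h + 1" using on by (metis oddE)
  define v :: "nat \<Rightarrow> 'b" where
    "v = (\<lambda>i. if i \<in> {1..n} \<and> even i then - ((-1) ^ ((n + i - 1) div 2)) else 0)"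
  have sp: "special_pt n = (v, v)" by (simp add: special_pt_def v_def Let_def)
  define X where "X = XE \<beta> n v"
  define c :: "nat \<Rightarrow> 'b" where "c = (\<lambda>j. if odd j then (-1) ^ ((j - 1) div 2) else 0)"
  have Xev: "\<And>m. m \<le> h + 1 \<Longrightarrow> X (2 * m) = (-1) ^ (h + 1 - m)"
  proof -
    fix m assume m: "m \<le> h + 1"
    show "X (2 * m) = (-1) ^ (h + 1 - m)"
    proof (cases "m = 0")
      case True then show ?thesis using b n by (simp add: X_def XE_def)
    next
      case m0: False
      show ?thesis
      proof (cases "m = h + 1")
        case True then show ?thesis using n by (simp add: X_def XE_def)
      next
        case False
        then have "X (2 * m) = - ((-1) ^ (h + m))" using m m0 n
          by (simp add: X_def XE_def v_def)
        then show ?thesis using sign_flip[OF m] by metis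
      qed
    qed
  qed
  have Xodd: "\<And>k. k \<in> {1..n} \<Longrightarrow> odd k \<Longrightarrow> X k = 0" by (auto simp: X_def XE_def v_def)
  have Xin: "\<And>j. j \<in> {1..n} \<Longrightarrow> X j = v j" by (auto simp: X_def XE_def)
  have mem: "(v, v) \<in> Xpts \<beta> n"
    unfolding Xpts_def
  proof (clarify, intro conjI allI impI ballI)
    fix j :: nat assume "j \<notin> {1..n}" then show "v j = 0" "v j = 0" by (auto simp: v_def)
  next
    fix i assume i: "i \<in> {1..n}"
    show "v i * v i = rhsX \<beta> n v i"
    proof (cases "even i")
      case True
      then obtain m where m: "i = 2 * m" by blast
      have vv: "v i * v i = 1" using True i by (simp add: v_def minus_one_power_iff)
      have i2: "i \<ge> 2" using i True by (cases "i = 1") auto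
      have i3: "i - 1 \<in> {1..n}" "odd (i - 1)" using i i2 True by auto
      have "X (i - 1) = 0" using Xodd i3 by blast
      then show ?thesis using vv row_eq[OF i, of \<beta> v] unfolding X_def by simp
    next
      case False
      then obtain m where m: "i = 2 * m + 1" by (metis oddE)
      have mh: "m \<le> h" using i m n by auto
      have e: "i - 1 = 2 * m" "i + 1 = 2 * (m + 1)" using m by auto
      have "X (i - 1) * X (i + 1) = (-1) ^ (h + 1 - m) * (-1) ^ (h + 1 - (m + 1))"
      proof -
        have x1: "X (2 * m) = (-1) ^ (h + 1 - m)" by (rule Xev) (use mh in simp)
        have x2: "X (2 * (m + 1)) = (-1) ^ (h + 1 - (m + 1))" by (rule Xev) (use mh in simp)
        show ?thesis unfolding e x1 x2 by (rule refl)
      qed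
      also have "h + 1 - m = Suc (h - m)" using mh by simp
      finally have "X (i - 1) * X (i + 1) = -1" by simp
      moreover have "v i = 0" using False by (simp add: v_def)
      ultimately show ?thesis using row_eq[OF i, of \<beta> v] unfolding X_def by simp
    qed
  qed
  have col': "\<forall>j\<in>{1..n}. (\<Sum>i=1..n. c i * dX' v i j) = 0"
  proof
    fix j assume j: "j \<in> {1..n}"
    have "c j * v j = 0" by (auto simp: c_def v_def)
    then show "(\<Sum>i=1..n. c i * dX' v i j) = 0" using sum_dX'[OF j, of c v] by simp
  qed
  have col: "\<forall>j\<in>{1..n}. (\<Sum>i=1..n. c i * dX \<beta> n v v i j) = 0"
  proof
    fix j assume j: "j \<in> {1..n}"
    have CE: "\<And>k. CE n c k = (if k \<in> {1..n} \<and> odd k then (-1) ^ ((k - 1) div 2) else 0)"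
      by (auto simp: CE_def c_def)
    have "CE n c j * v j - CE n c (j - 1) * X (j - 2) - CE n c (j + 1) * X (j + 2) = 0"
    proof (cases "even j")
      case False
      then show ?thesis unfolding CE by (auto simp: v_def)
    next
      case True
      then obtain m where m: "j = 2 * m" by blast
      have mh: "1 \<le> m" "m \<le> h" using j m n by auto
      have e: "j - 2 = 2 * (m - 1)" "j + 2 = 2 * (m + 1)" "(j - 1 - 1) div 2 = m - 1"
        "(j + 1 - 1) div 2 = m" using m mh by auto
      have o: "j - 1 \<in> {1..n}" "odd (j - 1)" "j + 1 \<in> {1..n}" "odd (j + 1)"
        using j m mh n by auto
      have "CE n c j * v j - CE n c (j - 1) * X (j - 2) - CE n c (j + 1) * X (j + 2)
          = - ((-1) ^ (m - 1) * (-1) ^ (h + 1 - (m - 1))) - (-1) ^ m * (-1) ^ (h + 1 - (m + 1))"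
        unfolding CE e using o True Xev[of "m - 1"] Xev[of "m + 1"] mh by simp
      also have "\<dots> = - ((-1) ^ (h + 1)) - (-1) ^ h"
        unfolding power_add[symmetric] using mh by simp
      also have "\<dots> = 0" by simp
      finally show ?thesis .
    qed
    then show "(\<Sum>i=1..n. c i * dX \<beta> n v v i j) = 0"
      using col_eq[OF j, of c \<beta> v v] unfolding X_def by simp
  qed
  have "\<exists>i\<in>{1..n}. c i \<noteq> 0" using n by (auto simp: c_def intro!: bexI[of _ 1])
  then show ?thesis unfolding singular_pt_def sp using mem col col' by auto
qed


theorem mainTheorem14:
  fixes \<alpha> :: "'a::field" and \<phi> :: "'a \<Rightarrow> 'b::field" and n :: nat
  assumes "\<alpha> \<noteq> 0"
    and "\<phi> 1 = 1" and "\<And>a b. \<phi> (a + b) = \<phi> a + \<phi> b" and "\<And>a b. \<phi> (a * b) = \<phi> a * \<phi> b"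
  shows "(even n \<longrightarrow> smoothX (\<phi> \<alpha>) n)
       \<and> (odd n \<and> \<alpha> \<noteq> (-1) ^ ((n + 1) div 2) \<longrightarrow> smoothX (\<phi> \<alpha>) n)
       \<and> (odd n \<and> \<alpha> = (-1) ^ ((n + 1) div 2) \<longrightarrow>
            {p. singular_pt (\<phi> \<alpha>) n p} = {special_pt n})"
proof -
  note add = assms(3) and mul = assms(4)
  have z: "\<phi> 0 = 0" using add[of 0 0] by (metis add_0 add_cancel_right_right)
  have neg: "\<And>a. \<phi> (- a) = - \<phi> a"
  proof -
    fix a have "\<phi> a + \<phi> (- a) = 0" using add[of a "- a"] z by simp
    then show "\<phi> (- a) = - \<phi> a" by (simp add: eq_neg_iff_add_eq_0 add.commute)
  qed
  have pw: "\<And>k. \<phi> ((-1) ^ k) = (-1) ^ k"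
  proof -
    fix k show "\<phi> ((-1) ^ k) = (-1) ^ k"
      by (induction k) (simp_all add: assms(2) mul neg)
  qed
  have nz: "\<And>a. a \<noteq> 0 \<Longrightarrow> \<phi> a \<noteq> 0"
  proof
    fix a :: 'a assume a: "a \<noteq> 0" and "\<phi> a = 0"
    then have "\<phi> (a * inverse a) = 0" using mul[of a "inverse a"] by simp
    then show False using a assms(2) by simp
  qed
  have inj: "\<And>a b. \<phi> a = \<phi> b \<Longrightarrow> a = b"
  proof (rule ccontr)
    fix a b assume "\<phi> a = \<phi> b" "a \<noteq> b"
    then have "\<phi> (a + - b) = 0" using add[of a "- b"] neg[of b] by simp
    moreover have "a + - b \<noteq> 0" using \<open>a \<noteq> b\<close> by simp
    ultimately show False using nz by blast
  qed
  have b0: "\<phi> \<alpha> \<noteq> 0" using nz assms(1) by blast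
  have C: "\<And>p. singular_pt (\<phi> \<alpha>) n p \<Longrightarrow> odd n \<and> \<alpha> = (-1) ^ ((n + 1) div 2) \<and> p = special_pt n"
  proof -
    fix p assume "singular_pt (\<phi> \<alpha>) n p"
    then have "singular_pt (\<phi> \<alpha>) n (fst p, snd p)" by simp
    from core[OF b0 this] have "odd n" "\<phi> \<alpha> = (-1) ^ ((n + 1) div 2)" "p = special_pt n"
      by auto
    moreover have "(-1) ^ ((n + 1) div 2) = \<phi> ((-1) ^ ((n + 1) div 2))" by (rule pw[symmetric])
    ultimately have "odd n" "\<phi> \<alpha> = \<phi> ((-1) ^ ((n + 1) div 2))" "p = special_pt n"
      by auto
    then show "odd n \<and> \<alpha> = (-1) ^ ((n + 1) div 2) \<and> p = special_pt n" using inj by blast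
  qed
  show ?thesis
  proof (intro conjI impI)
    assume "even n" then show "smoothX (\<phi> \<alpha>) n" unfolding smoothX_def using C by blast
  next
    assume "odd n \<and> \<alpha> \<noteq> (-1) ^ ((n + 1) div 2)"
    then show "smoothX (\<phi> \<alpha>) n" unfolding smoothX_def using C by blast
  next
    assume h: "odd n \<and> \<alpha> = (-1) ^ ((n + 1) div 2)"
    then have "\<phi> \<alpha> = (-1) ^ ((n + 1) div 2)" using pw[of "(n + 1) div 2"] by (simp only:)
    then have "singular_pt (\<phi> \<alpha>) n (special_pt n)" using conv h by blast
    then show "{p. singular_pt (\<phi> \<alpha>) n p} = {special_pt n}" using C by blast
  qed
qed

end
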